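(* Let $X$ be an irreducible compact complex space, $f:X\to X$ an open holomorphic map and $(\kappa_n)_{n\ge0}$ an analytic sub-multiplicative cocycle for $f$. For $n\ge0$ put $\kappa_{-n}(x):=\max_{y\in f^{-n}(x)}\kappa_n(y)$. Let $l\ge1$ be an integer. Then, pointwise on $X$, $$\limsup_{n\to\infty}[\kappa_{-nl}]^{1/(nl)}=\limsup_{n\to\infty}[\kappa_{-n}]^{1/n}\quad\text{and}\quad\liminf_{n\to\infty}[\kappa_{-nl}]^{1/(nl)}=\liminf_{n\to\infty}[\kappa_{-n}]^{1/n}.$$
   Context: $f^n$ denotes the $n$-th iterate of $f$. A sequence of functions $\kappa_n:X\to[1,+\infty[$, $n\ge0$, is an analytic sub-multiplicative cocycle if for all $n,m\ge0$ and $x\in X$: (1) $\kappa_n$ is upper semi-continuous for the Zariski topology on $X$ and $\min_X\kappa_n=1$; (2) $\kappa_{n+m}(x)\le\kappa_n(x)\kappa_m(f^n(x))$. *)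

theory Defs
  imports "HOL-Analysis.Analysis"
begin

text \<open>Abstract rendering of the Zariski topology of a compact complex space X
(whose points form the type 'a): a topology T on UNIV.\<close>

definition irreducible_top :: "'a topology \<Rightarrow> bool" where
  "irreducible_top T \<longleftrightarrow> topspace T \<noteq> {} \<and>
     (\<forall>U V. openin T U \<and> openin T V \<and> U \<noteq> {} \<and> V \<noteq> {} \<longrightarrow> U \<inter> V \<noteq> {})"

definition usc_wrt :: "'a topology \<Rightarrow> ('a \<Rightarrow> real) \<Rightarrow> bool" where
  "usc_wrt T g \<longleftrightarrow> (\<forall>a. openin T {x \<in> topspace T. g x < a})"

definition analytic_submult_cocycle ::
    "'a topology \<Rightarrow> ('a \<Rightarrow> 'a) \<Rightarrow> (nat \<Rightarrow> 'a \<Rightarrow> real) \<Rightarrow> bool" where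
  "analytic_submult_cocycle T f \<kappa> \<longleftrightarrow>
     (\<forall>n. usc_wrt T (\<kappa> n) \<and> (\<forall>x. 1 \<le> \<kappa> n x) \<and> (\<exists>x. \<kappa> n x = 1)) \<and>
     (\<forall>n m x. \<kappa> (n + m) x \<le> \<kappa> n x * \<kappa> m ((f ^^ n) x))"

definition kappa_back :: "('a \<Rightarrow> 'a) \<Rightarrow> (nat \<Rightarrow> 'a \<Rightarrow> real) \<Rightarrow> nat \<Rightarrow> 'a \<Rightarrow> real" where
  "kappa_back f \<kappa> n x = Max (\<kappa> n ` {y. (f ^^ n) y = x})"

end

theory Submission imports Defs begin

lemma ev_div:
  assumes "eventually P sequentially" "(l::nat) \<ge> 1"
  shows "eventually (\<lambda>n. P (n div l)) sequentially"
proof -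
  from assms(1) obtain N where N: "\<And>q. q \<ge> N \<Longrightarrow> P q" by (auto simp: eventually_sequentially)
  show ?thesis unfolding eventually_sequentially
  proof (intro exI allI impI)
    fix n assume "N * l \<le> n"
    then have "N \<le> n div l" using assms(2)
      by (metis div_le_mono nonzero_mult_div_cancel_right not_one_le_zero)
    then show "P (n div l)" by (rule N)
  qed
qed

lemma abstract_lim:
  fixes a b e :: "nat \<Rightarrow> real" and l :: nat
  assumes l: "l \<ge> 1"
    and b: "\<And>q. b q = a (q * l)"
    and e: "e \<longlonglongrightarrow> 0"
    and H: "eventually (\<lambda>n. a n \<le> b (n div l) + e n \<and> b (n div l + 1) \<le> a n + e n) sequentially"
  shows "limsup (\<lambda>q. ereal (b q)) = limsup (\<lambda>n. ereal (a n)) \<and>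
         liminf (\<lambda>q. ereal (b q)) = liminf (\<lambda>n. ereal (a n))"
proof -
  have sm: "strict_mono (\<lambda>q. q * l)" using l by (auto simp: strict_mono_def)
  have bb: "(\<lambda>q. ereal (b q)) = (\<lambda>n. ereal (a n)) \<circ> (\<lambda>q. q * l)" using b by auto
  have e1: "limsup (\<lambda>q. ereal (b q)) \<le> limsup (\<lambda>n. ereal (a n))"
    unfolding bb by (rule limsup_subseq_mono[OF sm])
  have e3: "liminf (\<lambda>n. ereal (a n)) \<le> liminf (\<lambda>q. ereal (b q))"
    unfolding bb by (rule liminf_subseq_mono[OF sm])
  have e2: "limsup (\<lambda>n. ereal (a n)) \<le> limsup (\<lambda>q. ereal (b q))"
    unfolding Limsup_le_iff
  proof (intro allI impI)
    fix y assume y: "limsup (\<lambda>q. ereal (b q)) < y"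
    show "\<forall>\<^sub>F n in sequentially. ereal (a n) < y"
    proof (cases y)
      case PInf then show ?thesis by auto
    next
      case MInf then show ?thesis using y by auto
    next
      case (real r)
      obtain s where s: "limsup (\<lambda>q. ereal (b q)) < ereal s" "s < r"
      proof (cases "limsup (\<lambda>q. ereal (b q))")
        case (real t) then show ?thesis using that[of "(t+r)/2"] y \<open>y = ereal r\<close> by auto
      next
        case PInf then show ?thesis using y by auto
      next
        case MInf then show ?thesis using that[of "r - 1"] by auto
      qed
      have "eventually (\<lambda>q. ereal (b q) < ereal s) sequentially"
        by (rule Limsup_lessD[OF s(1)])
      then have ev1: "eventually (\<lambda>n. b (n div l) < s) sequentially"
        using ev_div[OF _ l] by force
      have ev2: "eventually (\<lambda>n. \<bar>e n - 0\<bar> < r - s) sequentially"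
        using tendstoD[OF e, of "r - s"] s(2) by (simp add: dist_real_def)
      show ?thesis using H ev1 ev2
        by eventually_elim (auto simp: real)
    qed
  qed
  have e4: "liminf (\<lambda>q. ereal (b q)) \<le> liminf (\<lambda>n. ereal (a n))"
    unfolding le_Liminf_iff
  proof (intro allI impI)
    fix y assume y: "y < liminf (\<lambda>q. ereal (b q))"
    show "\<forall>\<^sub>F n in sequentially. y < ereal (a n)"
    proof (cases y)
      case MInf then show ?thesis by auto
    next
      case PInf then show ?thesis using y by auto
    next
      case (real r)
      obtain s where s: "ereal s < liminf (\<lambda>q. ereal (b q))" "r < s"
      proof (cases "liminf (\<lambda>q. ereal (b q))")
        case (real t) then show ?thesis using that[of "(t+r)/2"] y \<open>y = ereal r\<close> by auto
      next
        case MInf then show ?thesis using y by auto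
      next
        case PInf then show ?thesis using that[of "r + 1"] by auto
      qed
      have "eventually (\<lambda>q. ereal s < ereal (b q)) sequentially"
        by (rule less_LiminfD[OF s(1)])
      then have "eventually (\<lambda>q. s < b (Suc q)) sequentially"
        using eventually_sequentially_Suc[of "\<lambda>q. s < b q"] by simp
      then have ev1: "eventually (\<lambda>n. s < b (Suc (n div l))) sequentially"
        using ev_div[OF _ l] by force
      have ev2: "eventually (\<lambda>n. \<bar>e n - 0\<bar> < s - r) sequentially"
        using tendstoD[OF e, of "s - r"] s(2) by (simp add: dist_real_def)
      show ?thesis using H ev1 ev2
        by eventually_elim (auto simp: real)
    qed
  qed
  show ?thesis using e1 e2 e3 e4 by auto
qed


lemma usc_bounded:
  assumes "topspace T = UNIV" "compact_space T" "usc_wrt T g"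
  shows "\<exists>S. \<forall>y. g y \<le> S"
proof -
  let ?U = "range (\<lambda>k::nat. {y \<in> topspace T. g y < real k})"
  have "\<forall>U\<in>?U. openin T U" using assms(3) unfolding usc_wrt_def by auto
  moreover have "topspace T \<subseteq> \<Union>?U"
  proof
    fix y assume "y \<in> topspace T"
    obtain k :: nat where "g y < real k" using reals_Archimedean2 by blast
    then have "y \<in> {y \<in> topspace T. g y < real k}" using \<open>y \<in> topspace T\<close> by simp
    then show "y \<in> \<Union>?U" by blast
  qed
  ultimately have "\<exists>F. finite F \<and> F \<subseteq> ?U \<and> topspace T \<subseteq> \<Union>F"
    using compact_space_alt[THEN iffD1, OF assms(2)] by blast
  then obtain F where F: "finite F" "F \<subseteq> ?U" "topspace T \<subseteq> \<Union>F" by blast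
  then obtain K where K: "finite K" "F = (\<lambda>k::nat. {y \<in> topspace T. g y < real k}) ` K"
    by (meson finite_subset_image)
  have "g y \<le> real (Max K)" for y
  proof -
    have "y \<in> \<Union>F" using F(3) assms(1) by auto
    then obtain k where "k \<in> K" "g y < real k" using K by auto
    moreover have "k \<le> Max K" using K(1) \<open>k \<in> K\<close> by auto
    ultimately show ?thesis by linarith
  qed
  then show ?thesis by blast
qed

lemma fin_pre:
  fixes f :: "'a \<Rightarrow> 'a"
  assumes "\<And>z. finite {y. f y = z}"
  shows "finite {y. (f ^^ n) y = z}"
proof (induction n arbitrary: z)
  case 0
  have "{y. (f ^^ 0) y = w} = {w::'a}" for w by auto
  then show ?case by simp
next
  case (Suc n)
  have "{y. (f ^^ Suc n) y = z} = (\<Union>w\<in>{w. (f ^^ n) w = z}. {y. f y = w})"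
    by (auto simp: funpow_swap1)
  then show ?case using Suc assms by simp
qed

lemma mult_err:
  fixes c t B :: real
  assumes "1 \<le> c" "0 \<le> t" "t \<le> B"
  shows "c * t \<le> t + (c - 1) * B"
proof -
  have "(c - 1) * t \<le> (c - 1) * B" using assms by (intro mult_left_mono) auto
  then show ?thesis by (simp add: algebra_simps)
qed


theorem lemma2p2:
  fixes T :: "'a topology" and f :: "'a \<Rightarrow> 'a" and \<kappa> :: "nat \<Rightarrow> 'a \<Rightarrow> real"
    and l :: nat and x :: 'a
  assumes "topspace T = UNIV"
    and "compact_space T"
    and "irreducible_top T"
    and "continuous_map T T f"
    and "surj f"
    and "\<And>z. finite {y. f y = z}"
    and "analytic_submult_cocycle T f \<kappa>"
    and "l \<ge> 1"
  shows "(limsup (\<lambda>n. ereal (kappa_back f \<kappa> (n * l) x powr (1 / real (n * l))))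
           = limsup (\<lambda>n. ereal (kappa_back f \<kappa> n x powr (1 / real n)))) \<and>
         (liminf (\<lambda>n. ereal (kappa_back f \<kappa> (n * l) x powr (1 / real (n * l))))
           = liminf (\<lambda>n. ereal (kappa_back f \<kappa> n x powr (1 / real n))))"
proof -
  note ac = assms(7)[unfolded analytic_submult_cocycle_def]
  have k1: "\<And>n y. 1 \<le> \<kappa> n y" using ac by blast
  have coc: "\<And>n m y. \<kappa> (n + m) y \<le> \<kappa> n y * \<kappa> m ((f ^^ n) y)" using ac by blast
  have "\<forall>i. \<exists>S. \<forall>y. \<kappa> i y \<le> S"
    using usc_bounded[OF assms(1,2)] ac by blast
  then obtain S where S: "\<And>i y. \<kappa> i y \<le> S i" by metis
  have S1: "\<And>i. 1 \<le> S i" using S k1 order_trans by blast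
  have fin: "\<And>n z. finite (\<kappa> n ` {y. (f ^^ n) y = z})"
    using fin_pre[OF assms(6)] by blast
  have ne: "\<And>n z. {y. (f ^^ n) y = z} \<noteq> {}"
    using surj_fn[OF assms(5)] by (metis (mono_tags, lifting) empty_Collect_eq surjD)
  have kb_ge: "\<And>n y z. (f ^^ n) y = z \<Longrightarrow> \<kappa> n y \<le> kappa_back f \<kappa> n z"
    unfolding kappa_back_def using fin by (intro Max_ge) auto
  have kb_at: "\<And>n z. \<exists>y. (f ^^ n) y = z \<and> kappa_back f \<kappa> n z = \<kappa> n y"
  proof -
    fix n z
    have "kappa_back f \<kappa> n z \<in> \<kappa> n ` {y. (f ^^ n) y = z}"
      unfolding kappa_back_def using fin ne by (intro Max_in) auto
    then show "\<exists>y. (f ^^ n) y = z \<and> kappa_back f \<kappa> n z = \<kappa> n y" by auto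
  qed
  have key: "\<And>a b z. kappa_back f \<kappa> (a + b) z \<le> S a * kappa_back f \<kappa> b z"
  proof -
    fix a b z
    obtain y where y: "(f ^^ (a + b)) y = z" "kappa_back f \<kappa> (a + b) z = \<kappa> (a + b) y"
      using kb_at by blast
    have "(f ^^ b) ((f ^^ a) y) = z" using y(1) funpow_add[of b a f] by (simp add: add.commute)
    then have "\<kappa> b ((f ^^ a) y) \<le> kappa_back f \<kappa> b z" by (rule kb_ge)
    then have "\<kappa> a y * \<kappa> b ((f ^^ a) y) \<le> S a * kappa_back f \<kappa> b z"
      using S[of a y] k1[of a y] k1[of b "(f ^^ a) y"] by (intro mult_mono) auto
    then show "kappa_back f \<kappa> (a + b) z \<le> S a * kappa_back f \<kappa> b z"
      using y(2) coc[of a b y] by linarith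
  qed
  define v where "v n = kappa_back f \<kappa> n x" for n
  have v1: "\<And>n. 1 \<le> v n"
    unfolding v_def using kb_at k1 by metis
  have v0: "\<And>n. 0 \<le> v n" using v1 order_trans zero_le_one by blast
  define K where "K = Max (S ` {..l})"
  have KS: "\<And>i. i \<le> l \<Longrightarrow> S i \<le> K" unfolding K_def by (intro Max_ge) auto
  have K1: "1 \<le> K" using KS[of 0] S1[of 0] by linarith
  have F1: "\<And>n. v n \<le> K * v (n div l * l)"
  proof -
    fix n
    have "n = n mod l + n div l * l" by simp
    then have "v n \<le> S (n mod l) * v (n div l * l)" unfolding v_def by (metis key)
    also have "\<dots> \<le> K * v (n div l * l)"
      using KS[of "n mod l"] v0[of "n div l * l"] assms(8)
      by (intro mult_right_mono) auto
    finally show "v n \<le> K * v (n div l * l)" .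
  qed
  have F2: "\<And>n. v ((n div l + 1) * l) \<le> K * v n"
  proof -
    fix n
    have lt: "n mod l < l" using assms(8) by simp
    have "(n div l + 1) * l = (l - n mod l) + n"
    proof -
      have e1: "(n div l + 1) * l = n div l * l + l" by (simp add: distrib_right)
      show ?thesis using e1 lt div_mult_mod_eq[of n l] by linarith
    qed
    then have "v ((n div l + 1) * l) \<le> S (l - n mod l) * v n" unfolding v_def by (metis key)
    also have "\<dots> \<le> K * v n"
      using KS[of "l - n mod l"] v0[of n] by (intro mult_right_mono) auto
    finally show "v ((n div l + 1) * l) \<le> K * v n" .
  qed
  have vb: "\<And>n. v n \<le> S 1 ^ n * S 0"
  proof -
    fix n show "v n \<le> S 1 ^ n * S 0"
    proof (induction n)
      case 0
      obtain y where "kappa_back f \<kappa> 0 x = \<kappa> 0 y" using kb_at by blast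
      then show ?case using S[of 0 y] by (simp add: v_def)
    next
      case (Suc n)
      have "v (Suc n) \<le> S 1 * v n" unfolding v_def using key[of 1 n x] by simp
      also have "\<dots> \<le> S 1 * (S 1 ^ n * S 0)" using Suc S1[of 1] by (intro mult_left_mono) auto
      finally show ?case by simp
    qed
  qed
  define a where "a n = v n powr (1 / real n)" for n
  define B where "B = S 1 * S 0"
  have B1: "1 \<le> B" unfolding B_def using S1[of 0] S1[of 1]
    using mult_mono[of 1 "S 1" 1 "S 0"] by simp
  have a1: "\<And>n. 1 \<le> a n" unfolding a_def using v1 by (simp add: ge_one_powr_ge_zero)
  have aB: "\<And>n. a n \<le> B"
  proof -
    fix n
    show "a n \<le> B"
    proof (cases "n = 0")
      case True then show ?thesis using v1[of 0] B1 by (simp add: a_def)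
    next
      case False
      have "a n \<le> (S 1 ^ n * S 0) powr (1 / real n)"
        unfolding a_def using v1[of n] vb[of n] by (intro powr_mono2) auto
      also have "\<dots> = (S 1 ^ n) powr (1 / real n) * S 0 powr (1 / real n)"
        by (rule powr_mult)
      also have "(S 1 ^ n) powr (1 / real n) = S 1"
        using False S1[of 1] by (simp add: powr_realpow[symmetric] powr_powr)
      also have "S 0 powr (1 / real n) \<le> S 0 powr 1"
        using False S1[of 0] by (intro powr_mono) auto
      also have "S 0 powr 1 = S 0" using S1[of 0] by simp
      finally show ?thesis unfolding B_def using S1[of 1] by (simp add: mult_left_mono)
    qed
  qed
  define e where "e n = (K powr (1 / real n) - 1) * B" for n
  have lim: "(\<lambda>n. K powr (1 / real n)) \<longlonglongrightarrow> K powr 0"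
    using K1 by (intro tendsto_powr tendsto_const lim_const_over_n) auto
  have e0: "e \<longlonglongrightarrow> 0"
  proof -
    have "(\<lambda>n. (K powr (1 / real n) - 1) * B) \<longlonglongrightarrow> (K powr 0 - 1) * B"
      by (intro tendsto_intros lim)
    then show ?thesis using K1 unfolding e_def by simp
  qed
  have Kp: "\<And>n. 1 \<le> K powr (1 / real n)" using K1 by (simp add: ge_one_powr_ge_zero)
  have H: "eventually (\<lambda>n. a n \<le> a (n div l * l) + e n \<and>
                          a ((n div l + 1) * l) \<le> a n + e n) sequentially"
    unfolding eventually_sequentially
  proof (intro exI allI impI)
    fix n assume nl: "l \<le> n"
    define m where "m = n div l * l"
    define m' where "m' = (n div l + 1) * l"
    have m0: "0 < m" unfolding m_def using nl assms(8)
      by (metis div_greater_zero_iff less_le_trans mult_pos_pos zero_less_one)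
    have mn: "m \<le> n" unfolding m_def by (simp add: div_times_less_eq_dividend)
    have nm': "n \<le> m'" unfolding m'_def
      by (metis add.commute add_lessD1 div_mult_mod_eq less_imp_le mod_less_divisor
          assms(8) nat_add_left_cancel_less distrib_right mult_1 order_less_le_trans
          less_le_trans zero_less_one)
    have n0: "0 < n" using m0 mn by linarith
    have "a n \<le> (K * v m) powr (1 / real n)"
      unfolding a_def m_def using F1[of n] v0[of n] by (intro powr_mono2) auto
    also have "\<dots> = K powr (1 / real n) * v m powr (1 / real n)" by (rule powr_mult)
    also have "v m powr (1 / real n) \<le> v m powr (1 / real m)"
      using v1[of m] m0 mn by (intro powr_mono) (auto simp: frac_le)
    also have "v m powr (1 / real m) = a m" by (simp add: a_def)
    finally have i1: "a n \<le> K powr (1 / real n) * a m"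
      using Kp[of n] by (simp add: mult_left_mono)
    have "a m' \<le> (K * v n) powr (1 / real m')"
      unfolding a_def m'_def using F2[of n] v0 by (intro powr_mono2) auto
    also have "\<dots> = K powr (1 / real m') * v n powr (1 / real m')" by (rule powr_mult)
    also have "\<dots> \<le> K powr (1 / real n) * v n powr (1 / real n)"
    proof (intro mult_mono)
      show "K powr (1 / real m') \<le> K powr (1 / real n)"
        using K1 n0 nm' by (intro powr_mono) (auto simp: frac_le)
      show "v n powr (1 / real m') \<le> v n powr (1 / real n)"
        using v1[of n] n0 nm' by (intro powr_mono) (auto simp: frac_le)
    qed (use Kp in auto)
    finally have i2: "a m' \<le> K powr (1 / real n) * a n" by (simp add: a_def)
    show "a n \<le> a (n div l * l) + e n \<and> a ((n div l + 1) * l) \<le> a n + e n"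
      using i1 i2 mult_err[OF Kp[of n] _ aB[of m]] mult_err[OF Kp[of n] _ aB[of n]] a1[of m] a1[of n]
      unfolding e_def m_def m'_def by (smt (verit))
  qed
  have "limsup (\<lambda>q. ereal (a (q * l))) = limsup (\<lambda>n. ereal (a n)) \<and>
        liminf (\<lambda>q. ereal (a (q * l))) = liminf (\<lambda>n. ereal (a n))"
    by (rule abstract_lim[OF assms(8) _ e0]) (use H in auto)
  then show ?thesis unfolding a_def v_def by simp
qed

end
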